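(* Let $(X,d)$ and $(Y,\rho)$ be compact metric spaces, let $F=\{f_1,\dots,f_k\}$ be a multiple mapping on $X$ and $G=\{g_1,\dots,g_m\}$ a multiple mapping on $Y$, and let $T:X\to Y$ be a topological conjugacy from $(X,F)$ to $(Y,G)$. Then $F$ is Hausdorff metric Kato chaotic (with respect to $d_H$) if and only if $G$ is Hausdorff metric Kato chaotic (with respect to $\rho_H$).
   Context: A multiple mapping $F=\{f_1,\dots,f_k\}$ on $X$ is a finite tuple of continuous self-maps of $X$; for $x\in X$ and $n\ge1$, $F(x)=\{f_1(x),\dots,f_k(x)\}$ and $F^n(x)=\{f_{i_1}f_{i_2}\cdots f_{i_n}(x)\mid i_1,\dots,i_n\in\{1,\dots,k\}\}$; for $A\subset X$, $F(A)=\bigcup_{a\in A}F(a)$. $d_H$ (resp. $\rho_H$) denotes the Hausdorff metric $d_H(A,B)=\max\{\sup_{a\in A}\inf_{b\in B}d(a,b),\sup_{b\in B}\inf_{a\in A}d(a,b)\}$ on nonempty compact subsets. $F$ is Hausdorff metric sensitive if there is $\delta>0$ such that for every nonempty open $U\subset X$ there exist $x,y\in U$, $n\in\mathbb{Z}^+$ with $d_H(F^n(x),F^n(y))>\delta$; Hausdorff metric accessible if for every $\epsilon>0$ and all nonempty open $U,V\subset X$ there exist $x\in U,y\in V,n\in\mathbb{Z}^+$ with $d_H(F^n(x),F^n(y))<\epsilon$; Hausdorff metric Kato chaotic if it is both. Here $\mathbb{Z}^+=\{1,2,\dots\}$. A topological conjugacy from $(X,F)$ to $(Y,G)$ is a homeomorphism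 $T:X\to Y$ such that $T(F(x))=G(T(x))$ for all $x\in X$. *)

theory Defs
  imports "HOL-Analysis.Analysis"
begin

definition multiple_mapping :: "'a::topological_space set \<Rightarrow> ('a \<Rightarrow> 'a) list \<Rightarrow> bool" where
  "multiple_mapping X fs \<longleftrightarrow> fs \<noteq> [] \<and> (\<forall>f \<in> set fs. continuous_on X f \<and> f ` X \<subseteq> X)"

definition mm_img :: "('a \<Rightarrow> 'a) list \<Rightarrow> 'a \<Rightarrow> 'a set" where
  "mm_img fs x = (\<lambda>f. f x) ` set fs"

fun mm_pow :: "('a \<Rightarrow> 'a) list \<Rightarrow> nat \<Rightarrow> 'a \<Rightarrow> 'a set" where
  "mm_pow fs 0 x = {x}"
| "mm_pow fs (Suc n) x = (\<Union>y \<in> mm_pow fs n x. mm_img fs y)"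

definition hausdorff_dist :: "'a::metric_space set \<Rightarrow> 'a set \<Rightarrow> real" where
  "hausdorff_dist A B = max (SUP a\<in>A. infdist a B) (SUP b\<in>B. infdist b A)"

definition hm_sensitive :: "'a::metric_space set \<Rightarrow> ('a \<Rightarrow> 'a) list \<Rightarrow> bool" where
  "hm_sensitive X fs \<longleftrightarrow> (\<exists>\<delta>>0. \<forall>U. openin (top_of_set X) U \<and> U \<noteq> {} \<longrightarrow>
     (\<exists>x\<in>U. \<exists>y\<in>U. \<exists>n::nat. n \<ge> 1 \<and> hausdorff_dist (mm_pow fs n x) (mm_pow fs n y) > \<delta>))"

definition hm_accessible :: "'a::metric_space set \<Rightarrow> ('a \<Rightarrow> 'a) list \<Rightarrow> bool" where
  "hm_accessible X fs \<longleftrightarrow> (\<forall>\<epsilon>>0. \<forall>U V. openin (top_of_set X) U \<and> U \<noteq> {} \<and>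
     openin (top_of_set X) V \<and> V \<noteq> {} \<longrightarrow>
     (\<exists>x\<in>U. \<exists>y\<in>V. \<exists>n::nat. n \<ge> 1 \<and> hausdorff_dist (mm_pow fs n x) (mm_pow fs n y) < \<epsilon>))"

definition hm_kato_chaotic :: "'a::metric_space set \<Rightarrow> ('a \<Rightarrow> 'a) list \<Rightarrow> bool" where
  "hm_kato_chaotic X fs \<longleftrightarrow> hm_sensitive X fs \<and> hm_accessible X fs"

definition topological_conjugacy ::
  "'a::topological_space set \<Rightarrow> ('a \<Rightarrow> 'a) list \<Rightarrow> 'b::topological_space set \<Rightarrow> ('b \<Rightarrow> 'b) list \<Rightarrow> ('a \<Rightarrow> 'b) \<Rightarrow> bool" where
  "topological_conjugacy X fs Y gs T \<longleftrightarrow>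
     (\<exists>T'. homeomorphism X Y T T') \<and> (\<forall>x\<in>X. T ` (mm_img fs x) = mm_img gs (T x))"

end

theory Submission
  imports Defs
begin

lemma infdist_fin_less: assumes "finite B" "B \<noteq> {}"
  shows "infdist a B < e \<longleftrightarrow> (\<exists>b\<in>B. dist a b < e)"
proof -
  have "infdist a B = Inf (dist a ` B)" using assms by (simp add: infdist_def)
  thus ?thesis using assms by (simp add: cInf_less_iff)
qed

lemma hd_less: fixes A B :: "'a::metric_space set"
  assumes "finite A" "A \<noteq> {}" "finite B" "B \<noteq> {}"
  shows "hausdorff_dist A B < e \<longleftrightarrow> (\<forall>a\<in>A. \<exists>b\<in>B. dist a b < e) \<and> (\<forall>b\<in>B. \<exists>a\<in>A. dist b a < e)"
  using assms by (simp add: hausdorff_dist_def finite_Sup_less_iff infdist_fin_less)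

lemma mm_pow_props:
  assumes "multiple_mapping X fs" "x \<in> X"
  shows "mm_pow fs n x \<subseteq> X \<and> finite (mm_pow fs n x) \<and> mm_pow fs n x \<noteq> {}"
proof (induction n)
  case 0 then show ?case using assms by simp
next
  case (Suc n)
  have ne: "fs \<noteq> []" and cl: "\<And>f y. f \<in> set fs \<Longrightarrow> y \<in> X \<Longrightarrow> f y \<in> X"
    using assms(1) unfolding multiple_mapping_def by auto
  have "mm_pow fs (Suc n) x \<subseteq> X" using Suc cl by (auto simp: mm_img_def)
  moreover have "finite (mm_pow fs (Suc n) x)" using Suc by (simp add: mm_img_def)
  moreover have "mm_pow fs (Suc n) x \<noteq> {}" using Suc ne by (auto simp: mm_img_def)
  ultimately show ?case by blast
qed

lemma mm_pow_conj:
  assumes "multiple_mapping X fs" "x \<in> X" "\<forall>x\<in>X. T ` (mm_img fs x) = mm_img gs (T x)"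
  shows "T ` mm_pow fs n x = mm_pow gs n (T x)"
proof (induction n)
  case 0 then show ?case by simp
next
  case (Suc n)
  have sub: "mm_pow fs n x \<subseteq> X" using mm_pow_props[OF assms(1,2)] by blast
  have "T ` mm_pow fs (Suc n) x = (\<Union>y\<in>mm_pow fs n x. T ` mm_img fs y)" by (simp add: image_UN)
  also have "\<dots> = (\<Union>y\<in>mm_pow fs n x. mm_img gs (T y))" using sub assms(3) by (intro SUP_cong) auto
  also have "\<dots> = (\<Union>z\<in>T ` mm_pow fs n x. mm_img gs z)" by simp
  finally show ?case using Suc by simp
qed

lemma hd_transfer:
  fixes T :: "'a::metric_space \<Rightarrow> 'b::metric_space"
  assumes "uniformly_continuous_on S T" "e > 0"
  shows "\<exists>d>0. \<forall>A B. finite A \<and> A \<noteq> {} \<and> A \<subseteq> S \<and> finite B \<and> B \<noteq> {} \<and> B \<subseteq> S \<and>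
     hausdorff_dist A B < d \<longrightarrow> hausdorff_dist (T ` A) (T ` B) < e"
proof -
  obtain d where d: "d > 0" "\<And>x x'. x \<in> S \<Longrightarrow> x' \<in> S \<Longrightarrow> dist x' x < d \<Longrightarrow> dist (T x') (T x) < e"
    using assms unfolding uniformly_continuous_on_def by metis
  show ?thesis
  proof (intro exI[of _ d] conjI allI impI)
    fix A B assume h: "finite A \<and> A \<noteq> {} \<and> A \<subseteq> S \<and> finite B \<and> B \<noteq> {} \<and> B \<subseteq> S \<and> hausdorff_dist A B < d"
    then have c: "(\<forall>a\<in>A. \<exists>b\<in>B. dist a b < d) \<and> (\<forall>b\<in>B. \<exists>a\<in>A. dist b a < d)"
      using hd_less[of A B d] by blast
    have "(\<forall>a\<in>T`A. \<exists>b\<in>T`B. dist a b < e) \<and> (\<forall>b\<in>T`B. \<exists>a\<in>T`A. dist b a < e)"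
    proof (intro conjI ballI)
      fix a assume "a \<in> T ` A"
      then obtain a0 where a0: "a0 \<in> A" "a = T a0" by blast
      then obtain b0 where "b0 \<in> B" "dist a0 b0 < d" using c by blast
      then show "\<exists>b\<in>T`B. dist a b < e" using d(2)[of b0 a0] h a0 by auto
    next
      fix b assume "b \<in> T ` B"
      then obtain b0 where b0: "b0 \<in> B" "b = T b0" by blast
      then obtain a0 where "a0 \<in> A" "dist b0 a0 < d" using c by blast
      then show "\<exists>a\<in>T`A. dist b a < e" using d(2)[of a0 b0] h b0 by auto
    qed
    then show "hausdorff_dist (T ` A) (T ` B) < e" using h hd_less[of "T`A" "T`B" e] by blast
  qed (rule d(1))
qed

locale conj_setup =
  fixes X :: "'a::metric_space set" and Y :: "'b::metric_space set"
    and fs :: "('a \<Rightarrow> 'a) list" and gs :: "('b \<Rightarrow> 'b) list" and T :: "'a \<Rightarrow> 'b" and T' :: "'b \<Rightarrow> 'a"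
  assumes cX: "compact X" and cY: "compact Y"
    and mX: "multiple_mapping X fs" and mY: "multiple_mapping Y gs"
    and hom: "homeomorphism X Y T T'"
    and cj: "\<forall>x\<in>X. T ` (mm_img fs x) = mm_img gs (T x)"
begin

lemma TX: "\<And>x. x \<in> X \<Longrightarrow> T x \<in> Y" and T'Y: "\<And>y. y \<in> Y \<Longrightarrow> T' y \<in> X"
  and TT': "\<And>x. x \<in> X \<Longrightarrow> T' (T x) = x" and T'T: "\<And>y. y \<in> Y \<Longrightarrow> T (T' y) = y"
  using hom unfolding homeomorphism_def by auto

lemma ucT: "uniformly_continuous_on X T"
  using hom cX compact_uniformly_continuous unfolding homeomorphism_def by blast
lemma ucT': "uniformly_continuous_on Y T'"
  using hom cY compact_uniformly_continuous unfolding homeomorphism_def by blast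

lemma powT: "x \<in> X \<Longrightarrow> T ` mm_pow fs n x = mm_pow gs n (T x)"
  using mm_pow_conj[OF mX _ cj] by blast

lemma powT': "x \<in> X \<Longrightarrow> T' ` mm_pow gs n (T x) = mm_pow fs n x"
proof -
  assume x: "x \<in> X"
  have "T' ` mm_pow gs n (T x) = T' ` T ` mm_pow fs n x" using powT[OF x] by simp
  also have "\<dots> = mm_pow fs n x"
    using mm_pow_props[OF mX x] TT' by (metis (no_types, lifting) image_cong image_comp image_ident o_apply subsetD)
  finally show ?thesis .
qed

lemma openU: assumes "openin (top_of_set Y) U" "U \<noteq> {}"
  shows "openin (top_of_set X) (T' ` U) \<and> T' ` U \<noteq> {} \<and> (\<forall>x\<in>T' ` U. T x \<in> U)"
proof -
  have "openin (top_of_set X) (T' ` U)"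
    using homeomorphism_imp_open_map[OF homeomorphism_symD[OF hom] assms(1)] .
  moreover have "\<forall>x\<in>T' ` U. T x \<in> U" using assms(1) T'T openin_subset by fastforce
  ultimately show ?thesis using assms(2) by blast
qed

lemma sens: "hm_sensitive X fs \<Longrightarrow> hm_sensitive Y gs"
proof -
  assume "hm_sensitive X fs"
  then obtain \<delta> where \<delta>: "\<delta> > 0" and S0: "\<forall>U. openin (top_of_set X) U \<and> U \<noteq> {} \<longrightarrow>
     (\<exists>x\<in>U. \<exists>y\<in>U. \<exists>n::nat. n \<ge> 1 \<and> hausdorff_dist (mm_pow fs n x) (mm_pow fs n y) > \<delta>)"
    unfolding hm_sensitive_def by (elim exE conjE) (rule that)
  have S: "\<exists>x\<in>U. \<exists>y\<in>U. \<exists>n::nat. n \<ge> 1 \<and> hausdorff_dist (mm_pow fs n x) (mm_pow fs n y) > \<delta>"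
    if "openin (top_of_set X) U" "U \<noteq> {}" for U
    using S0 that by simp
  obtain \<eta> where \<eta>: "\<eta> > 0" and H: "\<And>A B. finite A \<and> A \<noteq> {} \<and> A \<subseteq> Y \<and> finite B \<and> B \<noteq> {} \<and> B \<subseteq> Y \<and>
     hausdorff_dist A B < \<eta> \<Longrightarrow> hausdorff_dist (T' ` A) (T' ` B) < \<delta>"
    using hd_transfer[OF ucT' \<delta>] by blast
  show ?thesis unfolding hm_sensitive_def
  proof (intro exI[of _ "\<eta>/2"] conjI allI impI)
    show "\<eta>/2 > 0" using \<eta> by simp
    fix U assume U: "openin (top_of_set Y) U \<and> U \<noteq> {}"
    then have o: "openin (top_of_set X) (T' ` U)" "T' ` U \<noteq> {}" "\<forall>x\<in>T' ` U. T x \<in> U"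
      using openU by blast+
    then obtain x y n where xy: "x \<in> T' ` U" "y \<in> T' ` U" "n \<ge> 1"
      and gt: "hausdorff_dist (mm_pow fs n x) (mm_pow fs n y) > \<delta>"
      using S[OF o(1) o(2)] by blast
    have xX: "x \<in> X" "y \<in> X" using xy openin_imp_subset[OF o(1)] by blast+
    have "hausdorff_dist (mm_pow gs n (T x)) (mm_pow gs n (T y)) > \<eta>/2"
    proof (rule ccontr)
      assume "\<not> ?thesis"
      then have "hausdorff_dist (mm_pow gs n (T x)) (mm_pow gs n (T y)) < \<eta>" using \<eta> by simp
      moreover have p1: "mm_pow gs n (T x) \<subseteq> Y \<and> finite (mm_pow gs n (T x)) \<and> mm_pow gs n (T x) \<noteq> {}"
        by (rule mm_pow_props[OF mY TX[OF xX(1)]])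
      moreover have p2: "mm_pow gs n (T y) \<subseteq> Y \<and> finite (mm_pow gs n (T y)) \<and> mm_pow gs n (T y) \<noteq> {}"
        by (rule mm_pow_props[OF mY TX[OF xX(2)]])
      ultimately have "hausdorff_dist (T' ` mm_pow gs n (T x)) (T' ` mm_pow gs n (T y)) < \<delta>"
        by (intro H) (simp only: simp_thms)
      then show False using gt powT'[OF xX(1)] powT'[OF xX(2)] by simp
    qed
    then show "\<exists>x\<in>U. \<exists>y\<in>U. \<exists>n::nat. n \<ge> 1 \<and> hausdorff_dist (mm_pow gs n x) (mm_pow gs n y) > \<eta>/2"
      using xy o(3) by blast
  qed
qed

lemma acc: "hm_accessible X fs \<Longrightarrow> hm_accessible Y gs"
proof -
  assume A: "hm_accessible X fs"
  show ?thesis unfolding hm_accessible_def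
  proof (intro allI impI)
    fix \<epsilon> :: real and U V assume \<epsilon>: "\<epsilon> > 0"
      and UV: "openin (top_of_set Y) U \<and> U \<noteq> {} \<and> openin (top_of_set Y) V \<and> V \<noteq> {}"
    obtain \<eta> where \<eta>: "\<eta> > 0" and H: "\<And>A B. finite A \<and> A \<noteq> {} \<and> A \<subseteq> X \<and> finite B \<and> B \<noteq> {} \<and> B \<subseteq> X \<and>
       hausdorff_dist A B < \<eta> \<Longrightarrow> hausdorff_dist (T ` A) (T ` B) < \<epsilon>"
      using hd_transfer[OF ucT \<epsilon>] by blast
    have oU: "openin (top_of_set X) (T' ` U)" "T' ` U \<noteq> {}" "\<forall>x\<in>T' ` U. T x \<in> U"
      using openU UV by blast+
    have oV: "openin (top_of_set X) (T' ` V)" "T' ` V \<noteq> {}" "\<forall>x\<in>T' ` V. T x \<in> V"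
      using openU UV by blast+
    obtain x y n where xy: "x \<in> T' ` U" "y \<in> T' ` V" "n \<ge> 1"
      and lt: "hausdorff_dist (mm_pow fs n x) (mm_pow fs n y) < \<eta>"
      using A[unfolded hm_accessible_def, rule_format, OF \<eta>, of "T' ` U" "T' ` V"] oU oV by blast
    have xX: "x \<in> X" "y \<in> X" using xy openin_imp_subset[OF oU(1)] openin_imp_subset[OF oV(1)] by blast+
    have "hausdorff_dist (T ` mm_pow fs n x) (T ` mm_pow fs n y) < \<epsilon>"
      using mm_pow_props[OF mX xX(1), of n] mm_pow_props[OF mX xX(2), of n] lt by (intro H) (simp only: simp_thms)
    then have "hausdorff_dist (mm_pow gs n (T x)) (mm_pow gs n (T y)) < \<epsilon>"
      using powT[OF xX(1)] powT[OF xX(2)] by simp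
    then show "\<exists>x\<in>U. \<exists>y\<in>V. \<exists>n::nat. n \<ge> 1 \<and> hausdorff_dist (mm_pow gs n x) (mm_pow gs n y) < \<epsilon>"
      using xy oU(3) oV(3) by blast
  qed
qed

lemma kato: "hm_kato_chaotic X fs \<Longrightarrow> hm_kato_chaotic Y gs"
  using sens acc unfolding hm_kato_chaotic_def by blast

lemma symm: "conj_setup Y X gs fs T' T"
proof
  show "homeomorphism Y X T' T" using homeomorphism_symD[OF hom] .
  show "\<forall>y\<in>Y. T' ` mm_img gs y = mm_img fs (T' y)"
  proof
    fix y assume y: "y \<in> Y"
    have "mm_img gs y = T ` mm_img fs (T' y)" using cj T'Y[OF y] T'T[OF y] by simp
    moreover have "mm_img fs (T' y) \<subseteq> X" using mX T'Y[OF y] unfolding multiple_mapping_def mm_img_def by auto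
    ultimately show "T' ` mm_img gs y = mm_img fs (T' y)" using TT' by (metis (no_types, lifting) image_cong image_comp image_ident o_apply subsetD)
  qed
next
  show "compact Y" by (rule cY)
next
  show "compact X" by (rule cX)
next
  show "multiple_mapping Y gs" by (rule mY)
next
  show "multiple_mapping X fs" by (rule mX)
qed

end

theorem corollary4p4:
  fixes X :: "'a::metric_space set" and Y :: "'b::metric_space set"
    and fs :: "('a \<Rightarrow> 'a) list" and gs :: "('b \<Rightarrow> 'b) list" and T :: "'a \<Rightarrow> 'b"
  assumes "compact X" and "compact Y"
    and "multiple_mapping X fs" and "multiple_mapping Y gs"
    and "topological_conjugacy X fs Y gs T"
  shows "hm_kato_chaotic X fs \<longleftrightarrow> hm_kato_chaotic Y gs"
proof -
  obtain T' where h: "homeomorphism X Y T T'" and c: "\<forall>x\<in>X. T ` (mm_img fs x) = mm_img gs (T x)"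
    using assms(5) unfolding topological_conjugacy_def by blast
  interpret C: conj_setup X Y fs gs T T' using assms(1-4) h c by unfold_locales
  interpret D: conj_setup Y X gs fs T' T by (rule C.symm)
  show ?thesis by (rule iffI, erule C.kato, erule D.kato)
qed

end
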